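(* Let $a\in\mathbb{C}_p$, $a\ne0$, $A=|a|_p$, and $f(x)=\frac{ax}{x^2+a}$. If $y_0,y_1,\dots,y_k\in\mathbb{C}_p\setminus\{\pm\sqrt{-a}\}$ form a periodic orbit of $f$, i.e. $f(y_i)=y_{i+1}$ for $0\le i<k$ and $f(y_k)=y_0$, then $$|y_0|_p=|y_1|_p=\dots=|y_k|_p\le\sqrt A.$$ *)

theory Defs
  imports "HOL-Computational_Algebra.Polynomial"
begin

text \<open>We model C_p abstractly:
  a field K with a non-archimedean absolute value v extending the normalized p-adic absolute
  value (v p = 1/p), which is algebraically closed and complete with respect to v.
  C_p with |.|_p is an instance of this class.\<close>

definition nonarch_abs :: "('a::field \<Rightarrow> real) \<Rightarrow> bool" where
  "nonarch_abs v \<longleftrightarrow>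
     (\<forall>x. 0 \<le> v x) \<and> (\<forall>x. v x = 0 \<longleftrightarrow> x = 0) \<and>
     (\<forall>x y. v (x * y) = v x * v y) \<and>
     (\<forall>x y. v (x + y) \<le> max (v x) (v y))"

definition alg_closed_field :: "'a::field itself \<Rightarrow> bool" where
  "alg_closed_field _ \<longleftrightarrow> (\<forall>q :: 'a poly. degree q > 0 \<longrightarrow> (\<exists>x. poly q x = 0))"

definition complete_wrt :: "('a::field \<Rightarrow> real) \<Rightarrow> bool" where
  "complete_wrt v \<longleftrightarrow>
     (\<forall>s :: nat \<Rightarrow> 'a. (\<forall>e>0. \<exists>N. \<forall>m\<ge>N. \<forall>n\<ge>N. v (s m - s n) < e) \<longrightarrow>
        (\<exists>L. \<forall>e>0. \<exists>N. \<forall>n\<ge>N. v (s n - L) < e))"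

definition Cp_like :: "nat \<Rightarrow> ('a::field \<Rightarrow> real) \<Rightarrow> bool" where
  "Cp_like p v \<longleftrightarrow> prime p \<and> nonarch_abs v \<and> v (of_nat p) = 1 / real p \<and>
     alg_closed_field TYPE('a) \<and> complete_wrt v"

definition fmap :: "'a::field \<Rightarrow> 'a \<Rightarrow> 'a" where
  "fmap a x = a * x / (x ^ 2 + a)"

end

theory Submission
  imports Defs
begin

lemma na_v1: assumes "nonarch_abs v" shows "v 1 = 1"
proof -
  have "v 1 = v 1 * v 1" using assms unfolding nonarch_abs_def by (metis mult_1_left)
  moreover have "v 1 \<noteq> 0" using assms unfolding nonarch_abs_def by simp
  ultimately show ?thesis by simp
qed

lemma na_neg: assumes "nonarch_abs v" shows "v (- x) = v x"
proof -
  have m: "\<And>x y. v (x*y) = v x * v y" and nn: "\<And>x. 0 \<le> v x"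
    using assms unfolding nonarch_abs_def by auto
  have "v (-1) * v (-1) = 1" using m[of "-1" "-1"] na_v1[OF assms] by simp
  hence "(v (-1))^2 = 1^2" by (simp add: power2_eq_square)
  hence "v (-1) = 1" using nn[of "-1"] by (rule power2_eq_imp_eq) simp
  thus ?thesis using m[of "-1" x] by simp
qed

lemma na_strict: assumes "nonarch_abs v" "v x < v y" shows "v (x + y) = v y"
proof -
  have t: "\<And>x y. v (x + y) \<le> max (v x) (v y)" using assms(1) unfolding nonarch_abs_def by auto
  have "v (x+y) \<le> v y" using t[of x y] assms(2) by simp
  moreover have "v y \<le> max (v (x+y)) (v (-x))" using t[of "x+y" "-x"] by simp
  ultimately show ?thesis using na_neg[OF assms(1), of x] assms(2) by linarith
qed

lemma na_div: assumes "nonarch_abs v" shows "v (x / y) = v x / v y"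
proof (cases "y = 0")
  case True
  have "v 0 = 0" using assms unfolding nonarch_abs_def by simp
  thus ?thesis using True by simp
next
  case False
  have m: "\<And>x y. v (x*y) = v x * v y" and z: "v y \<noteq> 0"
    using assms False unfolding nonarch_abs_def by auto
  have "v x = v (x/y) * v y" using m[of "x/y" y] False by simp
  thus ?thesis using z by simp
qed

lemma na_sq: assumes "nonarch_abs v" shows "v (x^2) = (v x)^2"
  using assms unfolding nonarch_abs_def by (simp add: power2_eq_square)

lemma L1:
  assumes "nonarch_abs v" "v x < sqrt (v a)"
  shows "v (fmap a x) = v x"
proof -
  have nn: "0 \<le> v x" "0 \<le> v a" using assms unfolding nonarch_abs_def by auto
  have "(v x)^2 < (sqrt (v a))^2" using assms(2) nn by (intro power_strict_mono) auto
  hence "(v x)^2 < v a" using nn by simp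
  hence "v (x^2) < v a" using na_sq[OF assms(1)] by simp
  hence e: "v (x^2 + a) = v a" using na_strict[OF assms(1)] by simp
  have "v a \<noteq> 0" using \<open>(v x)^2 < v a\<close> nn by auto
  have m: "v (a*x) = v a * v x" using assms(1) unfolding nonarch_abs_def by auto
  show ?thesis unfolding fmap_def using na_div[OF assms(1)] e m \<open>v a \<noteq> 0\<close> by simp
qed

lemma L2:
  assumes "nonarch_abs v" "v x > sqrt (v a)" "a \<noteq> 0"
  shows "v (fmap a x) < sqrt (v a)"
proof -
  have nn: "0 \<le> v x" "0 \<le> v a" using assms unfolding nonarch_abs_def by auto
  have "v a \<noteq> 0" using assms unfolding nonarch_abs_def by auto
  hence sp: "sqrt (v a) > 0" using nn by simp
  have "(sqrt (v a))^2 < (v x)^2" using assms(2) nn by (intro power_strict_mono) auto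
  hence "(v x)^2 > v a" using nn by simp
  hence "v a < v (x^2)" using na_sq[OF assms(1)] by simp
  hence e: "v (a + x^2) = (v x)^2" using na_strict[OF assms(1)] na_sq[OF assms(1)] by simp
  have m: "v (a*x) = v a * v x" using assms(1) unfolding nonarch_abs_def by auto
  have pos: "v x > 0" using assms(2) by (meson le_less_trans real_sqrt_ge_zero nn(2))
  have "v (fmap a x) = v a * v x / (v x)^2" unfolding fmap_def
    using na_div[OF assms(1)] e m by (simp add: add.commute)
  also have "\<dots> = v a / v x" using pos by (simp add: power2_eq_square)
  also have "\<dots> < sqrt (v a)"
  proof -
    have "v a = sqrt (v a) * sqrt (v a)" using nn by simp
    moreover have "sqrt (v a) * sqrt (v a) < sqrt (v a) * v x"
      by (rule mult_strict_left_mono[OF assms(2) sp])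
    ultimately have "v a < sqrt (v a) * v x" by linarith
    thus ?thesis using pos by (simp add: divide_less_eq)
  qed
  finally show ?thesis .
qed

theorem proposition4p1:
  fixes v :: "'a::field \<Rightarrow> real" and p :: nat and a :: 'a
    and y :: "nat \<Rightarrow> 'a" and k :: nat
  assumes "Cp_like p v"
    and "a \<noteq> 0"
    and "\<forall>i\<le>k. y i ^ 2 \<noteq> - a"
    and "\<forall>i<k. fmap a (y i) = y (Suc i)"
    and "fmap a (y k) = y 0"
  shows "(\<forall>i\<le>k. v (y i) = v (y 0)) \<and> v (y 0) \<le> sqrt (v a)"
proof -
  have na: "nonarch_abs v" using assms(1) unfolding Cp_like_def by simp
  define s where "s = sqrt (v a)"
  define z where "z n = y (n mod Suc k)" for n
  have zs: "fmap a (z n) = z (Suc n)" for n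
  proof (cases "n mod Suc k = k")
    case True
    hence "Suc n mod Suc k = 0" by (simp add: mod_Suc)
    thus ?thesis using True assms(5) unfolding z_def by simp
  next
    case False
    hence "n mod Suc k < k" using mod_less_divisor[of "Suc k" n] by linarith
    hence "Suc n mod Suc k = Suc (n mod Suc k)" using False by (simp add: mod_Suc)
    thus ?thesis using assms(4) \<open>n mod Suc k < k\<close> unfolding z_def by simp
  qed
  have stay: "v (z (m + d)) = v (z m)" if "v (z m) < s" for m d
  proof (induction d)
    case 0 thus ?case by simp
  next
    case (Suc d)
    hence "v (z (m+d)) < s" using that by simp
    hence "v (fmap a (z (m+d))) = v (z (m+d))" using L1[OF na] s_def by simp
    thus ?case using zs[of "m+d"] Suc by simp
  qed
  have per: "z (n + d * Suc k) = z n" for n d unfolding z_def by (metis mod_mult_self1)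
  have zy: "z i = y i" if "i \<le> k" for i using that unfolding z_def by simp
  have le: "v (z j) \<le> s" for j
  proof (rule ccontr)
    assume "\<not> v (z j) \<le> s"
    hence "v (z (Suc j)) < s" using L2[OF na, of a "z j"] assms(2) zs[of j] s_def by simp
    hence "v (z (Suc j + k)) = v (z (Suc j))" using stay by blast
    moreover have "Suc j + k = j + 1 * Suc k" by simp
    ultimately have "v (z j) = v (z (Suc j))" using per[of j 1] by metis
    thus False using \<open>v (z (Suc j)) < s\<close> \<open>\<not> v (z j) \<le> s\<close> by simp
  qed
  show ?thesis
  proof (cases "\<exists>j. v (z j) < s")
    case True
    then obtain j where j: "v (z j) < s" by blast
    have "v (y i) = v (z j)" if "i \<le> k" for i
    proof -
      have "v (z (j + (i + j * Suc k - j))) = v (z j)" using stay[OF j] .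
      moreover have "j + (i + j * Suc k - j) = i + j * Suc k" by simp
      ultimately show ?thesis using per zy that by metis
    qed
    thus ?thesis using le zy s_def by fastforce
  next
    case False
    hence "\<forall>j. v (z j) = s" using le by (meson not_less order_antisym)
    hence "v (y i) = s" if "i \<le> k" for i using zy[OF that] by metis
    thus ?thesis using s_def by simp
  qed
qed

end
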